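(* Let $n$ be a positive integer and let $L_3(n)$ denote the number of $3\times n$ Latin rectangles. For $s:\{0,1\}^3\to\mathbb{Z}_{\ge 0}$, written $s_\varepsilon$ for $\varepsilon=\varepsilon_1\varepsilon_2\varepsilon_3\in\{0,1\}^3$, and nonempty $J\subseteq\{1,2,3\}$, let $f_J=\sum_{\varepsilon:\ \varepsilon_j=0\text{ for all } j\in J}s_\varepsilon$ (so e.g. $f_{\{1\}}=s_{000}+s_{010}+s_{001}+s_{011}$, $f_{\{1,2\}}=s_{000}+s_{001}$, $f_{\{1,2,3\}}=s_{000}$). Then \[ L_3(n)=\sum_{s}(-1)^{\sum_\varepsilon|\varepsilon|\,s_\varepsilon}\frac{n!}{\prod_\varepsilon s_\varepsilon!}\big[f_{\{1\}}f_{\{2\}}f_{\{3\}}-f_{\{1,2\}}f_{\{3\}}-f_{\{2,3\}}f_{\{1\}}-f_{\{1,3\}}f_{\{2\}}+2f_{\{1,2,3\}}\big]^n, \] where the sum runs over all $s:\{0,1\}^3\to\mathbb{Z}_{\ge0}$ with $\sum_\varepsilon s_\varepsilon=n$ and $|\varepsilon|=\varepsilon_1+\varepsilon_2+\varepsilon_3$.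
   Context: A $k\times n$ Latin rectangle is a $k\times n$ matrix with entries in $\{1,\dots,n\}$ such that no row and no column contains a repeated entry (so each row is a permutation of $\{1,\dots,n\}$). The convention $0^0=1$ is used. *)

theory Defs
  imports "HOL-Analysis.Analysis"
begin

definition latin_rectangle :: "nat \<Rightarrow> nat \<Rightarrow> (nat \<Rightarrow> nat \<Rightarrow> nat) \<Rightarrow> bool" where
  "latin_rectangle k n M \<longleftrightarrow>
     (\<forall>i j. (i < k \<and> j < n) \<longrightarrow> M i j \<in> {1..n}) \<and>
     (\<forall>i j. \<not> (i < k \<and> j < n) \<longrightarrow> M i j = 0) \<and>
     (\<forall>i<k. inj_on (M i) {..<n}) \<and>
     (\<forall>j<n. inj_on (\<lambda>i. M i j) {..<k})"

definition L :: "nat \<Rightarrow> nat \<Rightarrow> nat" where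
  "L k n = card {M. latin_rectangle k n M}"

text \<open>Elements of {0,1}^3 are triples of booleans (True = 1).\<close>
type_synonym eps = "bool \<times> bool \<times> bool"

definition epscomp :: "eps \<Rightarrow> nat \<Rightarrow> bool" where
  "epscomp e j = (if j = 1 then fst e else if j = 2 then fst (snd e) else snd (snd e))"

definition weight :: "eps \<Rightarrow> nat" where
  "weight e = card {j \<in> {1,2,3}. epscomp e j}"

definition fJ :: "(eps \<Rightarrow> nat) \<Rightarrow> nat set \<Rightarrow> int" where
  "fJ s J = (\<Sum>e \<in> {e. \<forall>j\<in>J. \<not> epscomp e j}. int (s e))"

end

theory Submission
  imports Defs "HOL-Combinatorics.Multiset_Permutations"
begin


lemma prod_indicator:
  assumes "finite A"
  shows "(\<Prod>x\<in>A. (if P x then 1 else 0 :: int)) = (if \<forall>x\<in>A. P x then 1 else 0)"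
  using assms by (induction A rule: finite_induct) auto

lemma sum_indicator_card:
  assumes "finite A"
  shows "(\<Sum>x\<in>A. (if P x then 1 else 0 :: int)) = int (card {x\<in>A. P x})"
  using assms by (simp add: sum.If_cases Int_def conj_commute)

lemma sum_eps: "(\<Sum>e\<in>(UNIV::eps set). f e) = (\<Sum>a\<in>UNIV. \<Sum>b\<in>UNIV. \<Sum>c\<in>UNIV. f (a,b,c))"
  by (simp add: UNIV_Times_UNIV[symmetric] sum.cartesian_product del: UNIV_Times_UNIV)

lemma weight_eq: "weight (a,b,c) = of_bool a + of_bool b + of_bool c"
proof -
  have "{j \<in> {1,2,3}. epscomp (a,b,c) j} = (if a then {1} else {}) \<union> (if b then {2} else {}) \<union> (if c then {3::nat} else {})"
    by (auto simp: epscomp_def split: if_splits)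
  then show ?thesis unfolding weight_def
    by (cases a; cases b; cases c) (simp_all add: card_insert_if)
qed

lemma triple_id:
  fixes x1 x2 x3 :: "nat \<Rightarrow> int"
  assumes I: "finite I"
  shows "(\<Sum>a\<in>I. \<Sum>b\<in>I. \<Sum>c\<in>I. (if a \<noteq> b \<and> b \<noteq> c \<and> a \<noteq> c then 1 else 0) * (x1 a * x2 b * x3 c))
    = sum x1 I * sum x2 I * sum x3 I - (\<Sum>a\<in>I. x1 a * x2 a) * sum x3 I
      - (\<Sum>a\<in>I. x2 a * x3 a) * sum x1 I - (\<Sum>a\<in>I. x1 a * x3 a) * sum x2 I
      + 2 * (\<Sum>a\<in>I. x1 a * x2 a * x3 a)"
proof -
  define F where "F a b c = x1 a * x2 b * x3 c" for a b c
  have d: "(if a \<noteq> b \<and> b \<noteq> c \<and> a \<noteq> c then 1 else 0) * F a b c =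
     F a b c - (if a = b then F a b c else 0) - (if b = c then F a b c else 0) - (if a = c then F a b c else 0)
     + 2 * (if b = c then (if a = b then F a b c else 0) else 0)" for a b c :: nat
    by auto
  have t0: "(\<Sum>a\<in>I. \<Sum>b\<in>I. \<Sum>c\<in>I. F a b c) = sum x1 I * sum x2 I * sum x3 I"
  proof -
    define S2 where "S2 = sum x2 I"
    define S3 where "S3 = sum x3 I"
    have e1: "(\<Sum>c\<in>I. F a b c) = x1 a * x2 b * S3" for a b
      unfolding S3_def F_def by (simp add: sum_distrib_left)
    have e2: "(\<Sum>b\<in>I. x1 a * x2 b * S3) = x1 a * S2 * S3" for a
      unfolding S2_def by (simp add: sum_distrib_left sum_distrib_right)
    have e3: "(\<Sum>a\<in>I. x1 a * S2 * S3) = sum x1 I * S2 * S3"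
      by (simp add: sum_distrib_right)
    show ?thesis unfolding S2_def[symmetric] S3_def[symmetric] by (simp only: e1 e2 e3)
  qed
  have t1: "(\<Sum>a\<in>I. \<Sum>b\<in>I. \<Sum>c\<in>I. (if a = b then F a b c else 0)) = (\<Sum>a\<in>I. x1 a * x2 a) * sum x3 I"
  proof -
    have "(\<Sum>a\<in>I. \<Sum>b\<in>I. \<Sum>c\<in>I. (if a = b then F a b c else 0)) = (\<Sum>a\<in>I. \<Sum>c\<in>I. \<Sum>b\<in>I. (if a = b then F a b c else 0))"
      by (rule sum.cong[OF refl], rule sum.swap)
    also have "\<dots> = (\<Sum>a\<in>I. \<Sum>c\<in>I. (x1 a * x2 a) * x3 c)" using I by (simp add: sum.delta F_def)
    also have "\<dots> = (\<Sum>a\<in>I. x1 a * x2 a) * sum x3 I" by (rule sum_product[symmetric])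
    finally show ?thesis .
  qed
  have t2: "(\<Sum>a\<in>I. \<Sum>b\<in>I. \<Sum>c\<in>I. (if b = c then F a b c else 0)) = (\<Sum>a\<in>I. x2 a * x3 a) * sum x1 I"
  proof -
    have "(\<Sum>a\<in>I. \<Sum>b\<in>I. \<Sum>c\<in>I. (if b = c then F a b c else 0)) = (\<Sum>a\<in>I. \<Sum>b\<in>I. x1 a * (x2 b * x3 b))" using I by (simp add: sum.delta F_def mult.assoc)
    also have "\<dots> = sum x1 I * (\<Sum>a\<in>I. x2 a * x3 a)" by (rule sum_product[symmetric])
    finally show ?thesis by (simp only: mult.commute)
  qed
  have t3: "(\<Sum>a\<in>I. \<Sum>b\<in>I. \<Sum>c\<in>I. (if a = c then F a b c else 0)) = (\<Sum>a\<in>I. x1 a * x3 a) * sum x2 I"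
  proof -
    have "(\<Sum>a\<in>I. \<Sum>b\<in>I. \<Sum>c\<in>I. (if a = c then F a b c else 0)) = (\<Sum>a\<in>I. \<Sum>b\<in>I. (x1 a * x3 a) * x2 b)" using I by (simp add: sum.delta F_def mult_ac)
    also have "\<dots> = (\<Sum>a\<in>I. x1 a * x3 a) * sum x2 I" by (rule sum_product[symmetric])
    finally show ?thesis .
  qed
  have t4: "(\<Sum>a\<in>I. \<Sum>b\<in>I. \<Sum>c\<in>I. (if b = c then (if a = b then F a b c else 0) else 0)) = (\<Sum>a\<in>I. x1 a * x2 a * x3 a)"
  proof -
    have "(\<Sum>a\<in>I. \<Sum>b\<in>I. \<Sum>c\<in>I. (if b = c then (if a = b then F a b c else 0) else 0)) = (\<Sum>a\<in>I. \<Sum>b\<in>I. (if a = b then F a b b else 0))" using I by (simp add: sum.delta)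
    also have "\<dots> = (\<Sum>a\<in>I. F a a a)" using I by (simp add: sum.delta)
    finally show ?thesis by (simp add: F_def)
  qed
  have "(\<Sum>a\<in>I. \<Sum>b\<in>I. \<Sum>c\<in>I. (if a \<noteq> b \<and> b \<noteq> c \<and> a \<noteq> c then 1 else 0) * F a b c)
     = (\<Sum>a\<in>I. \<Sum>b\<in>I. \<Sum>c\<in>I. F a b c) - (\<Sum>a\<in>I. \<Sum>b\<in>I. \<Sum>c\<in>I. (if a = b then F a b c else 0))
      - (\<Sum>a\<in>I. \<Sum>b\<in>I. \<Sum>c\<in>I. (if b = c then F a b c else 0)) - (\<Sum>a\<in>I. \<Sum>b\<in>I. \<Sum>c\<in>I. (if a = c then F a b c else 0))
      + 2 * (\<Sum>a\<in>I. \<Sum>b\<in>I. \<Sum>c\<in>I. (if b = c then (if a = b then F a b c else 0) else 0))"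
    by (simp only: d sum.distrib sum_subtractf sum_distrib_left)
  then show ?thesis unfolding t0 t1 t2 t3 t4 by (simp add: F_def)
qed



definition cnt :: "nat \<Rightarrow> (nat \<Rightarrow> eps) \<Rightarrow> eps \<Rightarrow> nat" where
  "cnt n \<epsilon> e = card {i \<in> {..<n}. \<epsilon> i = e}"

lemma of_nat_cnt: "(of_nat (cnt n \<epsilon> e) :: 'a::comm_semiring_1) = (\<Sum>i<n. if \<epsilon> i = e then 1 else 0)"
proof -
  have "cnt n \<epsilon> e = (\<Sum>i\<in>{i \<in> {..<n}. \<epsilon> i = e}. 1)" unfolding cnt_def by (simp only: card_eq_sum)
  also have "\<dots> = (\<Sum>i<n. if \<epsilon> i = e then 1 else 0)" by (rule sum.inter_filter) simp
  finally have "(of_nat (cnt n \<epsilon> e) :: 'a) = (\<Sum>i<n. of_nat (if \<epsilon> i = e then 1 else 0))"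
    by (simp only: of_nat_sum)
  also have "\<dots> = (\<Sum>i<n. if \<epsilon> i = e then 1 else 0)"
    by (rule sum.cong) auto
  finally show ?thesis .
qed

lemma sum_cnt:
  fixes g :: "eps \<Rightarrow> 'a::comm_semiring_1"
  shows "(\<Sum>e\<in>E. g e * of_nat (cnt n \<epsilon> e)) = (\<Sum>i<n. if \<epsilon> i \<in> E then g (\<epsilon> i) else 0)"
proof -
  have fin: "finite E" by simp
  have "(\<Sum>e\<in>E. g e * of_nat (cnt n \<epsilon> e)) = (\<Sum>e\<in>E. \<Sum>i<n. if \<epsilon> i = e then g e else 0)"
    by (simp add: of_nat_cnt sum_distrib_left if_distrib cong: if_cong)
  also have "\<dots> = (\<Sum>i<n. \<Sum>e\<in>E. if \<epsilon> i = e then g e else 0)"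
    by (rule sum.swap)
  also have "\<dots> = (\<Sum>i<n. if \<epsilon> i \<in> E then g (\<epsilon> i) else 0)"
    using fin by (simp only: sum.delta')
  finally show ?thesis .
qed

lemma sum_cnt_total: "(\<Sum>e\<in>UNIV. cnt n \<epsilon> e) = n"
  using sum_cnt[where g="\<lambda>_. 1::nat" and E=UNIV and n=n and \<epsilon>=\<epsilon>] by simp

lemma weight_cnt: "(\<Sum>e\<in>UNIV. weight e * cnt n \<epsilon> e) = (\<Sum>i<n. weight (\<epsilon> i))"
  using sum_cnt[where g="weight" and E=UNIV and n=n and \<epsilon>=\<epsilon>] by simp

lemma fJ_cnt: "fJ (cnt n \<epsilon>) J = (\<Sum>i<n. if \<forall>j\<in>J. \<not> epscomp (\<epsilon> i) j then 1 else 0)"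
  unfolding fJ_def using sum_cnt[where g="\<lambda>_. 1::int" and E="{e. \<forall>j\<in>J. \<not> epscomp e j}" and n=n and \<epsilon>=\<epsilon>] by simp

definition z :: "nat \<Rightarrow> eps \<Rightarrow> int" where
  "z j e = (if epscomp e j then 0 else 1)"

definition dist3 :: "nat \<times> nat \<times> nat \<Rightarrow> int" where
  "dist3 t = (case t of (a,b,c) \<Rightarrow> if a \<noteq> b \<and> b \<noteq> c \<and> a \<noteq> c then 1 else 0)"

definition wt :: "(nat \<Rightarrow> eps) \<Rightarrow> nat \<times> nat \<times> nat \<Rightarrow> int" where
  "wt \<epsilon> t = (case t of (a,b,c) \<Rightarrow> dist3 (a,b,c) * (z 1 (\<epsilon> a) * z 2 (\<epsilon> b) * z 3 (\<epsilon> c)))"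

abbreviation T3 :: "nat \<Rightarrow> (nat \<times> nat \<times> nat) set" where
  "T3 n \<equiv> {..<n} \<times> {..<n} \<times> {..<n}"

definition bracket :: "(eps \<Rightarrow> nat) \<Rightarrow> int" where
  "bracket s = fJ s {1} * fJ s {2} * fJ s {3} - fJ s {1,2} * fJ s {3}
          - fJ s {2,3} * fJ s {1} - fJ s {1,3} * fJ s {2} + 2 * fJ s {1,2,3}"

lemma bracket_cnt: "bracket (cnt n \<epsilon>) = (\<Sum>t\<in>T3 n. wt \<epsilon> t)"
proof -
  have f1: "fJ (cnt n \<epsilon>) {1} = (\<Sum>i<n. z 1 (\<epsilon> i))"
    unfolding fJ_cnt by (rule sum.cong) (auto simp: z_def)
  have f2: "fJ (cnt n \<epsilon>) {2} = (\<Sum>i<n. z 2 (\<epsilon> i))"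
    unfolding fJ_cnt by (rule sum.cong) (auto simp: z_def)
  have f3: "fJ (cnt n \<epsilon>) {3} = (\<Sum>i<n. z 3 (\<epsilon> i))"
    unfolding fJ_cnt by (rule sum.cong) (auto simp: z_def)
  have f12: "fJ (cnt n \<epsilon>) {1,2} = (\<Sum>i<n. z 1 (\<epsilon> i) * z 2 (\<epsilon> i))"
    unfolding fJ_cnt by (rule sum.cong) (auto simp: z_def)
  have f23: "fJ (cnt n \<epsilon>) {2,3} = (\<Sum>i<n. z 2 (\<epsilon> i) * z 3 (\<epsilon> i))"
    unfolding fJ_cnt by (rule sum.cong) (auto simp: z_def)
  have f13: "fJ (cnt n \<epsilon>) {1,3} = (\<Sum>i<n. z 1 (\<epsilon> i) * z 3 (\<epsilon> i))"
    unfolding fJ_cnt by (rule sum.cong) (auto simp: z_def)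
  have f123: "fJ (cnt n \<epsilon>) {1,2,3} = (\<Sum>i<n. z 1 (\<epsilon> i) * z 2 (\<epsilon> i) * z 3 (\<epsilon> i))"
    unfolding fJ_cnt by (rule sum.cong) (auto simp: z_def)
  have "(\<Sum>t\<in>T3 n. wt \<epsilon> t) = (\<Sum>a<n. \<Sum>b<n. \<Sum>c<n. wt \<epsilon> (a,b,c))"
    by (simp add: sum.cartesian_product)
  also have "\<dots> = (\<Sum>a<n. \<Sum>b<n. \<Sum>c<n. (if a \<noteq> b \<and> b \<noteq> c \<and> a \<noteq> c then 1 else 0) *
       ((\<lambda>i. z 1 (\<epsilon> i)) a * (\<lambda>i. z 2 (\<epsilon> i)) b * (\<lambda>i. z 3 (\<epsilon> i)) c))"
    by (simp add: wt_def dist3_def)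
  also have "\<dots> = bracket (cnt n \<epsilon>)"
    unfolding triple_id[OF finite_lessThan] bracket_def f1 f2 f3 f12 f23 f13 f123 by simp
  finally show ?thesis by simp
qed



abbreviation PE :: "nat \<Rightarrow> (nat \<Rightarrow> eps) set" where
  "PE n \<equiv> PiE {..<n} (\<lambda>_. UNIV)"

lemma count_mset_nth: "count (mset xs) e = card {i. i < length xs \<and> xs ! i = e}"
  by (simp add: count_mset count_list_eq_length_filter length_filter_conv_card eq_commute)

lemma card_fiber:
  assumes sn: "(\<Sum>e\<in>UNIV. s e) = n"
  shows "card {\<epsilon> \<in> PE n. cnt n \<epsilon> = s} = fact n div (\<Prod>e\<in>UNIV. fact (s e))"
proof -
  define M where "M = Abs_multiset s"
  have cM: "count M = s" unfolding M_def by (rule count_Abs_multiset) simp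
  have sizeM: "size M = n"
  proof -
    have "size M = sum (count M) (set_mset M)" by (rule size_multiset_overloaded_eq)
    also have "\<dots> = sum (count M) UNIV"
      by (rule sum.mono_neutral_left) (auto simp: count_eq_zero_iff)
    finally show ?thesis using sn cM by simp
  qed
  have prodM: "(\<Prod>x\<in>set_mset M. fact (count M x)) = (\<Prod>e\<in>UNIV. fact (s e) :: nat)"
  proof -
    have "(\<Prod>x\<in>set_mset M. fact (count M x)) = (\<Prod>e\<in>UNIV. fact (count M e) :: nat)"
      by (rule prod.mono_neutral_left) (auto simp: not_in_iff)
    then show ?thesis using cM by simp
  qed
  define f' where "f' = (\<lambda>xs i. if i < n then xs ! i else (undefined :: eps))"
  have bij: "bij_betw (\<lambda>\<epsilon>. map \<epsilon> [0..<n]) {\<epsilon> \<in> PE n. cnt n \<epsilon> = s} (permutations_of_multiset M)"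
  proof (rule bij_betw_byWitness[where f'=f'])
    show "\<forall>\<epsilon>\<in>{\<epsilon> \<in> PE n. cnt n \<epsilon> = s}. f' (map \<epsilon> [0..<n]) = \<epsilon>"
    proof
      fix \<epsilon> assume "\<epsilon> \<in> {\<epsilon> \<in> PE n. cnt n \<epsilon> = s}"
      then have "\<epsilon> \<in> PE n" by simp
      then show "f' (map \<epsilon> [0..<n]) = \<epsilon>"
        by (auto simp: f'_def PiE_iff extensional_def)
    qed
    show "\<forall>xs\<in>permutations_of_multiset M. map (f' xs) [0..<n] = xs"
    proof
      fix xs assume "xs \<in> permutations_of_multiset M"
      then have "mset xs = M" by (rule permutations_of_multisetD)
      then have "length xs = n" using sizeM by (metis size_mset)
      then show "map (f' xs) [0..<n] = xs"
        by (intro nth_equalityI) (auto simp: f'_def)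
    qed
    show "(\<lambda>\<epsilon>. map \<epsilon> [0..<n]) ` {\<epsilon> \<in> PE n. cnt n \<epsilon> = s} \<subseteq> permutations_of_multiset M"
    proof
      fix xs assume "xs \<in> (\<lambda>\<epsilon>. map \<epsilon> [0..<n]) ` {\<epsilon> \<in> PE n. cnt n \<epsilon> = s}"
      then obtain \<epsilon> where e: "cnt n \<epsilon> = s" and xs: "xs = map \<epsilon> [0..<n]" by auto
      have "mset xs = M"
      proof (rule multiset_eqI)
        fix e
        have "count (mset xs) e = card {i. i < n \<and> \<epsilon> i = e}"
          unfolding count_mset_nth xs by (rule arg_cong[where f=card]) auto
        also have "\<dots> = cnt n \<epsilon> e" unfolding cnt_def by (rule arg_cong[where f=card]) auto
        finally show "count (mset xs) e = count M e" using e cM by simp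
      qed
      then show "xs \<in> permutations_of_multiset M" by (rule permutations_of_multisetI)
    qed
    show "f' ` permutations_of_multiset M \<subseteq> {\<epsilon> \<in> PE n. cnt n \<epsilon> = s}"
    proof
      fix \<epsilon> assume "\<epsilon> \<in> f' ` permutations_of_multiset M"
      then obtain xs where xs: "xs \<in> permutations_of_multiset M" and e: "\<epsilon> = f' xs" by auto
      then have mx: "mset xs = M" by (simp add: permutations_of_multisetD)
      then have lx: "length xs = n" using sizeM by (metis size_mset)
      have "\<epsilon> \<in> PE n" unfolding e by (auto simp: f'_def PiE_iff extensional_def)
      moreover have "cnt n \<epsilon> = s"
      proof
        fix e'
        have "cnt n \<epsilon> e' = card {i. i < length xs \<and> xs ! i = e'}"
          unfolding cnt_def e lx by (rule arg_cong[where f=card]) (auto simp: f'_def)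
        also have "\<dots> = s e'" using mx cM count_mset_nth by metis
        finally show "cnt n \<epsilon> e' = s e'" .
      qed
      ultimately show "\<epsilon> \<in> {\<epsilon> \<in> PE n. cnt n \<epsilon> = s}" by simp
    qed
  qed
  have "card {\<epsilon> \<in> PE n. cnt n \<epsilon> = s} = card (permutations_of_multiset M)"
    by (rule bij_betw_same_card[OF bij])
  also have "\<dots> = fact n div (\<Prod>e\<in>UNIV. fact (s e))"
    using card_permutations_of_multiset(1)[of M] sizeM prodM by simp
  finally show ?thesis .
qed

lemma le_n: fixes s :: "eps \<Rightarrow> nat" assumes "sum s UNIV = n" shows "s x \<le> n"
proof -
  have "s x \<le> sum s UNIV" by (rule member_le_sum) simp_all
  then show ?thesis using assms by simp
qed
lemma finite_S: "finite {s :: eps \<Rightarrow> nat. (\<Sum>e\<in>UNIV. s e) = n}"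
proof (rule finite_subset)
  show "{s :: eps \<Rightarrow> nat. (\<Sum>e\<in>UNIV. s e) = n} \<subseteq> PiE UNIV (\<lambda>_. {..n})"
    using le_n by (auto simp: PiE_UNIV_domain)
  show "finite (PiE (UNIV::eps set) (\<lambda>_. {..n}))" by (rule finite_PiE) simp_all
qed

lemma regroup:
  fixes h :: "(eps \<Rightarrow> nat) \<Rightarrow> int"
  shows "(\<Sum>s\<in>{s :: eps \<Rightarrow> nat. (\<Sum>e\<in>UNIV. s e) = n}. int (fact n div (\<Prod>e\<in>UNIV. fact (s e))) * h s)
     = (\<Sum>\<epsilon>\<in>PE n. h (cnt n \<epsilon>))"
proof -
  let ?S = "{s :: eps \<Rightarrow> nat. (\<Sum>e\<in>UNIV. s e) = n}"
  have fP: "finite (PE n)" by (rule finite_PiE) auto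
  have "(\<Sum>\<epsilon>\<in>PE n. h (cnt n \<epsilon>)) = (\<Sum>s\<in>?S. \<Sum>\<epsilon>\<in>{\<epsilon>. \<epsilon> \<in> PE n \<and> cnt n \<epsilon> = s}. h (cnt n \<epsilon>))"
    by (rule sum.group[symmetric, OF fP finite_S]) (use sum_cnt_total in blast)
  also have "\<dots> = (\<Sum>s\<in>?S. int (fact n div (\<Prod>e\<in>UNIV. fact (s e))) * h s)"
  proof (rule sum.cong[OF refl])
    fix s assume "s \<in> ?S"
    then have c: "card {\<epsilon> \<in> PE n. cnt n \<epsilon> = s} = fact n div (\<Prod>e\<in>UNIV. fact (s e))"
      by (intro card_fiber) simp
    have "(\<Sum>\<epsilon>\<in>{\<epsilon>. \<epsilon> \<in> PE n \<and> cnt n \<epsilon> = s}. h (cnt n \<epsilon>)) = (\<Sum>\<epsilon>\<in>{\<epsilon> \<in> PE n. cnt n \<epsilon> = s}. h s)"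
      by (rule sum.cong) auto
    also have "\<dots> = int (card {\<epsilon> \<in> PE n. cnt n \<epsilon> = s}) * h s" by simp
    finally show "(\<Sum>\<epsilon>\<in>{\<epsilon>. \<epsilon> \<in> PE n \<and> cnt n \<epsilon> = s}. h (cnt n \<epsilon>)) = int (fact n div (\<Prod>e\<in>UNIV. fact (s e))) * h s"
      using c by simp
  qed
  finally show ?thesis by (rule sym)
qed



abbreviation Q :: "nat \<Rightarrow> (nat \<Rightarrow> nat \<times> nat \<times> nat) set" where
  "Q n \<equiv> PiE {..<n} (\<lambda>_. T3 n)"

definition R1 :: "nat \<Rightarrow> (nat \<Rightarrow> nat \<times> nat \<times> nat) \<Rightarrow> nat set" where
  "R1 n C = (\<lambda>k. fst (C k)) ` {..<n}"
definition R2 :: "nat \<Rightarrow> (nat \<Rightarrow> nat \<times> nat \<times> nat) \<Rightarrow> nat set" where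
  "R2 n C = (\<lambda>k. fst (snd (C k))) ` {..<n}"
definition R3 :: "nat \<Rightarrow> (nat \<Rightarrow> nat \<times> nat \<times> nat) \<Rightarrow> nat set" where
  "R3 n C = (\<lambda>k. snd (snd (C k))) ` {..<n}"

definition Dp :: "nat \<times> nat \<times> nat \<Rightarrow> bool" where
  "Dp t = (case t of (a,b,c) \<Rightarrow> a \<noteq> b \<and> b \<noteq> c \<and> a \<noteq> c)"

definition good :: "nat \<Rightarrow> (nat \<Rightarrow> nat \<times> nat \<times> nat) \<Rightarrow> bool" where
  "good n C = ((\<forall>k<n. Dp (C k)) \<and> (\<forall>i<n. i \<in> R1 n C \<and> i \<in> R2 n C \<and> i \<in> R3 n C))"

lemma step1:
  "(-1) ^ (\<Sum>e\<in>UNIV. weight e * cnt n \<epsilon> e) * bracket (cnt n \<epsilon>) ^ n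
   = (\<Prod>i<n. (-1::int) ^ weight (\<epsilon> i)) * (\<Sum>C\<in>Q n. \<Prod>k<n. wt \<epsilon> (C k))"
proof -
  have a: "(-1::int) ^ (\<Sum>e\<in>UNIV. weight e * cnt n \<epsilon> e) = (\<Prod>i<n. (-1::int) ^ weight (\<epsilon> i))"
    unfolding weight_cnt by (rule power_sum)
  have "bracket (cnt n \<epsilon>) ^ n = (\<Prod>k<n. bracket (cnt n \<epsilon>))" by simp
  also have "\<dots> = (\<Prod>k<n. \<Sum>t\<in>T3 n. wt \<epsilon> t)" unfolding bracket_cnt ..
  also have "\<dots> = (\<Sum>C\<in>Q n. \<Prod>k<n. wt \<epsilon> (C k))"
    by (rule prod_sum_PiE) auto
  finally show ?thesis using a by simp
qed

lemma step3:
  assumes CQ: "C \<in> Q n"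
  shows "(\<Sum>\<epsilon>\<in>PE n. (\<Prod>i<n. (-1::int) ^ weight (\<epsilon> i)) * (\<Prod>k<n. wt \<epsilon> (C k)))
    = (if good n C then 1 else 0)"
proof -
  define DC where "DC = (\<Prod>k<n. (if Dp (C k) then 1 else 0 :: int))"
  define I where "I i e = (if (i \<in> R1 n C \<longrightarrow> \<not> epscomp e 1) \<and> (i \<in> R2 n C \<longrightarrow> \<not> epscomp e 2)
       \<and> (i \<in> R3 n C \<longrightarrow> \<not> epscomp e 3) then 1 else (0::int))" for i e
  have Crange: "C k \<in> T3 n" if "k < n" for k using CQ that by (auto simp: PiE_iff)
  have wtC: "(\<Prod>k<n. wt \<epsilon> (C k)) = DC * (\<Prod>i<n. I i (\<epsilon> i))" for \<epsilon>
  proof -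
    have "(\<Prod>k<n. wt \<epsilon> (C k)) = (\<Prod>k<n. (if Dp (C k) then 1 else 0) *
         (if \<not> epscomp (\<epsilon> (fst (C k))) 1 \<and> \<not> epscomp (\<epsilon> (fst (snd (C k)))) 2 \<and> \<not> epscomp (\<epsilon> (snd (snd (C k)))) 3 then 1 else 0))"
      by (rule prod.cong[OF refl]) (auto simp: wt_def dist3_def Dp_def z_def split: prod.splits)
    also have "\<dots> = DC * (\<Prod>k<n. (if \<not> epscomp (\<epsilon> (fst (C k))) 1 \<and> \<not> epscomp (\<epsilon> (fst (snd (C k)))) 2 \<and> \<not> epscomp (\<epsilon> (snd (snd (C k)))) 3 then 1 else 0))"
      unfolding DC_def by (rule prod.distrib)
    also have "(\<Prod>k<n. (if \<not> epscomp (\<epsilon> (fst (C k))) 1 \<and> \<not> epscomp (\<epsilon> (fst (snd (C k)))) 2 \<and> \<not> epscomp (\<epsilon> (snd (snd (C k)))) 3 then 1 else 0 :: int))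
        = (\<Prod>i<n. I i (\<epsilon> i))"
    proof -
      have "(\<forall>k\<in>{..<n}. \<not> epscomp (\<epsilon> (fst (C k))) 1 \<and> \<not> epscomp (\<epsilon> (fst (snd (C k)))) 2 \<and> \<not> epscomp (\<epsilon> (snd (snd (C k)))) 3)
         \<longleftrightarrow> (\<forall>i\<in>{..<n}. (i \<in> R1 n C \<longrightarrow> \<not> epscomp (\<epsilon> i) 1) \<and> (i \<in> R2 n C \<longrightarrow> \<not> epscomp (\<epsilon> i) 2)
       \<and> (i \<in> R3 n C \<longrightarrow> \<not> epscomp (\<epsilon> i) 3))"
        using Crange by (auto simp: R1_def R2_def R3_def mem_Times_iff)
      then show ?thesis unfolding I_def by (simp only: prod_indicator finite_lessThan)
    qed
    finally show ?thesis .
  qed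
  have sumI: "(\<Sum>e\<in>UNIV. (-1::int) ^ weight e * I i e) = (if i \<in> R1 n C \<and> i \<in> R2 n C \<and> i \<in> R3 n C then 1 else 0)" for i
    unfolding sum_eps I_def
    by (cases "i \<in> R1 n C"; cases "i \<in> R2 n C"; cases "i \<in> R3 n C") (simp_all add: weight_eq epscomp_def UNIV_bool)
  have "(\<Sum>\<epsilon>\<in>PE n. (\<Prod>i<n. (-1::int) ^ weight (\<epsilon> i)) * (\<Prod>k<n. wt \<epsilon> (C k)))
      = (\<Sum>\<epsilon>\<in>PE n. DC * (\<Prod>i<n. (-1::int) ^ weight (\<epsilon> i) * I i (\<epsilon> i)))"
    by (rule sum.cong[OF refl]) (simp add: wtC prod.distrib mult_ac)
  also have "\<dots> = DC * (\<Sum>\<epsilon>\<in>PE n. \<Prod>i<n. (-1::int) ^ weight (\<epsilon> i) * I i (\<epsilon> i))"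
    by (simp add: sum_distrib_left)
  also have "(\<Sum>\<epsilon>\<in>PE n. \<Prod>i<n. (-1::int) ^ weight (\<epsilon> i) * I i (\<epsilon> i)) = (\<Prod>i<n. \<Sum>e\<in>UNIV. (-1::int) ^ weight e * I i e)"
    by (rule prod_sum_PiE[symmetric]) auto
  also have "\<dots> = (\<Prod>i<n. (if i \<in> R1 n C \<and> i \<in> R2 n C \<and> i \<in> R3 n C then 1 else 0))"
    by (simp only: sumI)
  also have "\<dots> = (if \<forall>i\<in>{..<n}. i \<in> R1 n C \<and> i \<in> R2 n C \<and> i \<in> R3 n C then 1 else 0)"
    by (simp only: prod_indicator finite_lessThan)
  finally show ?thesis unfolding DC_def good_def by (simp only: prod_indicator finite_lessThan) auto
qed

lemma rhs_card:
  "(\<Sum>\<epsilon>\<in>PE n. (-1) ^ (\<Sum>e\<in>UNIV. weight e * cnt n \<epsilon> e) * bracket (cnt n \<epsilon>) ^ n)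
   = int (card {C \<in> Q n. good n C})"
proof -
  have "(\<Sum>\<epsilon>\<in>PE n. (-1) ^ (\<Sum>e\<in>UNIV. weight e * cnt n \<epsilon> e) * bracket (cnt n \<epsilon>) ^ n)
     = (\<Sum>\<epsilon>\<in>PE n. \<Sum>C\<in>Q n. (\<Prod>i<n. (-1::int) ^ weight (\<epsilon> i)) * (\<Prod>k<n. wt \<epsilon> (C k)))"
    by (simp only: step1 sum_distrib_left)
  also have "\<dots> = (\<Sum>C\<in>Q n. \<Sum>\<epsilon>\<in>PE n. (\<Prod>i<n. (-1::int) ^ weight (\<epsilon> i)) * (\<Prod>k<n. wt \<epsilon> (C k)))"
    by (rule sum.swap)
  also have "\<dots> = (\<Sum>C\<in>Q n. if good n C then 1 else 0)"
    by (rule sum.cong[OF refl]) (rule step3)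
  also have "\<dots> = int (card {C \<in> Q n. good n C})"
    by (rule sum_indicator_card) (rule finite_PiE; simp)
  finally show ?thesis .
qed



lemma row_surj:
  fixes f :: "nat \<Rightarrow> nat" and n x :: nat
  assumes inj: "inj_on f {..<n}" and rng: "\<forall>k<n. f k \<in> {1..n}" and x: "x < n"
  shows "\<exists>k<n. f k = x + 1"
proof -
  have sub: "f ` {..<n} \<subseteq> {1..n}" using rng by auto
  have c1: "card (f ` {..<n}) = n" using inj by (simp add: card_image)
  have "card (f ` {..<n}) = card {1..n}" unfolding c1 by simp
  then have eq: "f ` {..<n} = {1..n}" by (rule card_subset_eq[OF finite_atLeastAtMost sub])
  have "x + 1 \<in> f ` {..<n}" unfolding eq using x by simp
  then obtain k where "k \<in> {..<n}" "x + 1 = f k" by (rule imageE)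
  then show ?thesis by auto
qed

lemma row_inj:
  fixes g :: "nat \<Rightarrow> nat" and n :: nat
  assumes surj: "\<forall>x<n. \<exists>k<n. g k = x" and rng: "\<forall>k<n. g k < n"
  shows "inj_on (\<lambda>k. g k + 1) {..<n}"
proof -
  have "g ` {..<n} = {..<n}"
  proof
    show "g ` {..<n} \<subseteq> {..<n}" using rng by auto
    show "{..<n} \<subseteq> g ` {..<n}"
    proof
      fix x assume "x \<in> {..<n}"
      then obtain k where "k < n" "g k = x" using surj by auto
      then show "x \<in> g ` {..<n}" by auto
    qed
  qed
  then have "card (g ` {..<n}) = card {..<n}" by simp
  then have "inj_on g {..<n}" by (rule eq_card_imp_inj_on[OF finite_lessThan])
  then show ?thesis by (simp add: inj_on_def)
qed

definition Phi :: "nat \<Rightarrow> (nat \<Rightarrow> nat \<times> nat \<times> nat) \<Rightarrow> nat \<Rightarrow> nat \<Rightarrow> nat" where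
  "Phi n C i k = (if i < 3 \<and> k < n then
      (if i = 0 then fst (C k) else if i = 1 then fst (snd (C k)) else snd (snd (C k))) + 1 else 0)"

definition Psi :: "nat \<Rightarrow> (nat \<Rightarrow> nat \<Rightarrow> nat) \<Rightarrow> nat \<Rightarrow> nat \<times> nat \<times> nat" where
  "Psi n M k = (if k < n then (M 0 k - 1, M 1 k - 1, M 2 k - 1) else undefined)"

lemma lt3: "(i::nat) < 3 \<longleftrightarrow> i = 0 \<or> i = 1 \<or> i = 2" by auto
lemma inj3D:
  assumes "inj_on f {..<3::nat}"
  shows "f 0 \<noteq> f 1 \<and> f 1 \<noteq> f 2 \<and> f 0 \<noteq> f 2"
proof (intro conjI notI)
  assume "f 0 = f 1" from inj_onD[OF assms this] show False by simp
next
  assume "f 1 = f 2" from inj_onD[OF assms this] show False by simp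
next
  assume "f 0 = f 2" from inj_onD[OF assms this] show False by simp
qed
lemma inj3I:
  assumes "f 0 \<noteq> f 1" "f 1 \<noteq> f 2" "f 0 \<noteq> f 2"
  shows "inj_on f {..<3::nat}"
proof (rule inj_onI)
  fix x y assume x: "x \<in> {..<3::nat}" and y: "y \<in> {..<3::nat}" and e: "f x = f y"
  from x have "x = 0 \<or> x = 1 \<or> x = 2" by (simp add: lt3)
  moreover from y have "y = 0 \<or> y = 1 \<or> y = 2" by (simp add: lt3)
  ultimately show "x = y" using e assms by (elim disjE; metis)
qed

lemma card_L: "L 3 n = card {C \<in> Q n. good n C}"
proof -
  have bij: "bij_betw (Phi n) {C \<in> Q n. good n C} {M. latin_rectangle 3 n M}"
  proof (rule bij_betw_byWitness[where f'="Psi n"])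
    show "\<forall>C\<in>{C \<in> Q n. good n C}. Psi n (Phi n C) = C"
    proof
      fix C assume "C \<in> {C \<in> Q n. good n C}"
      then have "C \<in> Q n" by simp
      then show "Psi n (Phi n C) = C"
        by (auto simp: Psi_def Phi_def PiE_iff extensional_def)
    qed
    show "\<forall>M\<in>{M. latin_rectangle 3 n M}. Phi n (Psi n M) = M"
    proof
      fix M assume "M \<in> {M. latin_rectangle 3 n M}"
      then have lr: "latin_rectangle 3 n M" by simp
      show "Phi n (Psi n M) = M"
      proof (intro ext)
        fix i k
        show "Phi n (Psi n M) i k = M i k"
        proof (cases "i < 3 \<and> k < n")
          case True
          then have "M i k \<in> {1..n}" using lr by (simp add: latin_rectangle_def)
          moreover have "i = 0 \<or> i = 1 \<or> i = 2" using True by auto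
          ultimately show ?thesis using True by (elim disjE) (simp_all add: Phi_def Psi_def)
        next
          case False
          have "M i k = 0" using lr False by (simp add: latin_rectangle_def)
          then show ?thesis using False by (simp add: Phi_def)
        qed
      qed
    qed
    show "Phi n ` {C \<in> Q n. good n C} \<subseteq> {M. latin_rectangle 3 n M}"
    proof
      fix M assume "M \<in> Phi n ` {C \<in> Q n. good n C}"
      then obtain C where CQ: "C \<in> Q n" and g: "good n C" and M: "M = Phi n C" by auto
      have rng: "C k \<in> T3 n" if "k < n" for k using CQ that by (auto simp: PiE_iff)
      have "latin_rectangle 3 n (Phi n C)"
        unfolding latin_rectangle_def
      proof (intro conjI allI impI)
        fix i j :: nat assume "i < 3 \<and> j < n"
        then show "Phi n C i j \<in> {1..n}" using rng[of j]
          by (auto simp: Phi_def mem_Times_iff)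
      next
        fix i j :: nat assume "\<not> (i < 3 \<and> j < n)"
        then show "Phi n C i j = 0" by (simp add: Phi_def)
      next
        fix i :: nat assume i: "i < 3"
        show "inj_on (Phi n C i) {..<n}"
        proof -
          define gg where "gg k = (if i = 0 then fst (C k) else if i = 1 then fst (snd (C k)) else snd (snd (C k)))" for k
          have "inj_on (\<lambda>k. gg k + 1) {..<n}"
          proof (rule row_inj)
            show "\<forall>x<n. \<exists>k<n. gg k = x"
            proof (intro allI impI)
              fix x assume x: "x < n"
              have "x \<in> R1 n C \<and> x \<in> R2 n C \<and> x \<in> R3 n C" using g x by (simp add: good_def)
              moreover have "i = 0 \<or> i = 1 \<or> i = 2" using i by auto
              ultimately show "\<exists>k<n. gg k = x"
                unfolding R1_def R2_def R3_def gg_def by (elim disjE) (auto simp: image_iff)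
            qed
            show "\<forall>k<n. gg k < n" using rng unfolding gg_def by (auto simp: mem_Times_iff)
          qed
          moreover have "\<forall>k\<in>{..<n}. Phi n C i k = gg k + 1" using i by (simp add: Phi_def gg_def)
          ultimately show ?thesis by (metis (no_types, lifting) inj_on_cong)
        qed
      next
        fix j assume j: "j < n"
        obtain a b c where Cj: "C j = (a,b,c)" by (cases "C j") auto
        have "Dp (C j)" using g j by (simp add: good_def)
        then show "inj_on (\<lambda>i. Phi n C i j) {..<3}"
          using j Cj by (intro inj3I) (simp_all add: Dp_def Phi_def)
      qed
      then show "M \<in> {M. latin_rectangle 3 n M}" using M by simp
    qed
    show "Psi n ` {M. latin_rectangle 3 n M} \<subseteq> {C \<in> Q n. good n C}"
    proof
      fix C assume "C \<in> Psi n ` {M. latin_rectangle 3 n M}"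
      then obtain M where lr: "latin_rectangle 3 n M" and C: "C = Psi n M" by auto
      have ent: "M i k \<in> {1..n}" if "i < 3" "k < n" for i k using lr that by (simp add: latin_rectangle_def)
      have rinj: "inj_on (M i) {..<n}" if "i < 3" for i using lr that by (simp add: latin_rectangle_def)
      have cinj: "inj_on (\<lambda>i. M i k) {..<3}" if "k < n" for k using lr that by (simp add: latin_rectangle_def)
      have "C \<in> Q n"
        unfolding C PiE_iff
      proof (intro conjI ballI)
        fix k assume k: "k \<in> {..<n}"
        then show "Psi n M k \<in> T3 n" using ent[of 0 k] ent[of 1 k] ent[of 2 k]
          by (auto simp: Psi_def)
      next
        show "Psi n M \<in> extensional {..<n}" by (simp add: Psi_def extensional_def)
      qed
      moreover have "good n C"
        unfolding good_def
      proof (intro conjI allI impI)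
        fix k assume k: "k < n"
        have "M 0 k \<noteq> M 1 k \<and> M 1 k \<noteq> M 2 k \<and> M 0 k \<noteq> M 2 k"
          using inj3D[OF cinj[OF k]] .
        then show "Dp (C k)" using k ent[of 0 k] ent[of 1 k] ent[of 2 k]
          by (auto simp: C Psi_def Dp_def)
      next
        fix x assume x: "x < n"
        have r: "\<exists>k<n. M i k - 1 = x" if i3: "i < 3" for i
        proof -
          have "\<forall>k<n. M i k \<in> {1..n}" using ent i3 by simp
          from row_surj[OF rinj[OF i3] this x]
          obtain k where "k < n" "M i k = x + 1" by blast
          then show ?thesis by auto
        qed
        show "x \<in> R1 n C" using r[of 0] by (auto simp: R1_def C Psi_def)
        show "x \<in> R2 n C" using r[of 1] by (auto simp: R2_def C Psi_def)
        show "x \<in> R3 n C" using r[of 2] by (auto simp: R3_def C Psi_def)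
      qed
      ultimately show "C \<in> {C \<in> Q n. good n C}" by simp
    qed
  qed
  show ?thesis unfolding L_def by (rule bij_betw_same_card[OF bij, symmetric])
qed


theorem mainTheorem3:
  fixes n :: nat
  assumes "n > 0"
  shows "int (L 3 n) =
    (\<Sum>s \<in> {s :: eps \<Rightarrow> nat. (\<Sum>e\<in>UNIV. s e) = n}.
       (-1) ^ (\<Sum>e\<in>UNIV. weight e * s e)
       * int (fact n div (\<Prod>e\<in>UNIV. fact (s e)))
       * (fJ s {1} * fJ s {2} * fJ s {3} - fJ s {1,2} * fJ s {3}
          - fJ s {2,3} * fJ s {1} - fJ s {1,3} * fJ s {2} + 2 * fJ s {1,2,3}) ^ n)"
proof -
  have "int (L 3 n) = int (card {C \<in> Q n. good n C})" by (simp add: card_L)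
  also have "\<dots> = (\<Sum>\<epsilon>\<in>PE n. (-1) ^ (\<Sum>e\<in>UNIV. weight e * cnt n \<epsilon> e) * bracket (cnt n \<epsilon>) ^ n)"
    by (rule rhs_card[symmetric])
  also have "\<dots> = (\<Sum>s\<in>{s :: eps \<Rightarrow> nat. (\<Sum>e\<in>UNIV. s e) = n}. int (fact n div (\<Prod>e\<in>UNIV. fact (s e)))
        * ((-1) ^ (\<Sum>e\<in>UNIV. weight e * s e) * bracket s ^ n))"
    by (rule regroup[symmetric])
  also have "\<dots> = (\<Sum>s \<in> {s :: eps \<Rightarrow> nat. (\<Sum>e\<in>UNIV. s e) = n}.
       (-1) ^ (\<Sum>e\<in>UNIV. weight e * s e)
       * int (fact n div (\<Prod>e\<in>UNIV. fact (s e)))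
       * (fJ s {1} * fJ s {2} * fJ s {3} - fJ s {1,2} * fJ s {3}
          - fJ s {2,3} * fJ s {1} - fJ s {1,3} * fJ s {2} + 2 * fJ s {1,2,3}) ^ n)"
    by (rule sum.cong[OF refl]) (simp only: bracket_def mult_ac)
  finally show ?thesis .
qed

end
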